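(* Let $P$ be a convex polytope in $\mathbb{R}^D$ with vertices in $\mathbb{Z}^D$. Let $r>0$, and fix a set $F_r \subset B_r(nP)$. Let $A$ be chosen uniformly at random from all subsets $S\subset L(nP)$ such that $S\cap B_r(nP) = F_r$, and let $\mathbf{k}\in M_r(nP+nP)$. Then, for some constant $c > 0$ independent of $n$, $$\mathbb{P}[\mathbf{k} \notin A+A]\ \le\ c \left( \tfrac34 \right)^{ \left| L (nP \cap (\mathbf{k} - nP)) \right|/2}.$$
   Context: For $S \subset \mathbb{R}^D$, $L(S) = S\cap \mathbb{Z}^D$, and $nS$ is the dilation of $S$ by $n$ about the origin; $\mathbf{k}-nP = \{\mathbf{k}-\mathbf{x}:\mathbf{x}\in nP\}$. For a convex polytope $Q$ and $r>0$, $B_r(Q) = \{\mathbf{q}\in L(Q) : d(\mathbf{q},\mathbf{v})\le r \text{ for some vertex } \mathbf{v} \text{ of } Q\}$, with $d$ the Euclidean metric, and $M_r(Q) = L(Q)\setminus B_r(Q)$. For a set $A$, $A+A=\{a_1+a_2: a_1,a_2\in A\}$. *)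

theory Defs
  imports "HOL-Analysis.Analysis" "HOL-Probability.Probability"
begin

definition lattice_pts :: "(real ^ 'D) set \<Rightarrow> (real ^ 'D) set" where
  "lattice_pts S = {x \<in> S. \<forall>i. x $ i \<in> \<int>}"

definition dil :: "nat \<Rightarrow> (real ^ 'D) set \<Rightarrow> (real ^ 'D) set" where
  "dil n S = (\<lambda>x. real n *\<^sub>R x) ` S"

definition sumset :: "(real ^ 'D) set \<Rightarrow> (real ^ 'D) set \<Rightarrow> (real ^ 'D) set" where
  "sumset A B = {a + b | a b. a \<in> A \<and> b \<in> B}"

definition refl_set :: "real ^ 'D \<Rightarrow> (real ^ 'D) set \<Rightarrow> (real ^ 'D) set" where
  "refl_set k S = (\<lambda>x. k - x) ` S"

definition near_vertices :: "real \<Rightarrow> (real ^ 'D) set \<Rightarrow> (real ^ 'D) set" where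
  "near_vertices r Q = {q \<in> lattice_pts Q. \<exists>v. v extreme_point_of Q \<and> dist q v \<le> r}"

definition middle_pts :: "real \<Rightarrow> (real ^ 'D) set \<Rightarrow> (real ^ 'D) set" where
  "middle_pts r Q = lattice_pts Q - near_vertices r Q"

end

theory Submission
  imports Defs
begin

lemma finite_lattice_pts:
  fixes S :: "(real^'D) set" assumes "bounded S" shows "finite (lattice_pts S)"
proof -
  obtain B where B: "\<forall>x\<in>S. norm x \<le> B" using assms bounded_iff by blast
  define K where "K = \<lceil>B\<rceil>"
  have "lattice_pts S \<subseteq> (\<lambda>f. \<chi> i. of_int (f i)) ` (\<Pi>\<^sub>E i\<in>UNIV. {-K..K})"
  proof
    fix x assume x: "x \<in> lattice_pts S"
    then have xS: "x \<in> S" and xi: "\<And>i. x $ i \<in> \<int>" by (auto simp: lattice_pts_def)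
    have eq: "x = (\<chi> i. of_int (\<lfloor>x $ i\<rfloor>))"
      using xi by (simp add: vec_eq_iff)
    have "\<bar>x $ i\<bar> \<le> B" for i using B xS component_le_norm_cart order_trans by blast
    then have "\<lfloor>x $ i\<rfloor> \<in> {-K..K}" for i
    proof -
      have fi: "real_of_int \<lfloor>x $ i\<rfloor> = x $ i" using xi by (metis Ints_cases floor_of_int)
      have "B \<le> real_of_int K" unfolding K_def by (rule le_of_int_ceiling)
      then have "real_of_int \<lfloor>x $ i\<rfloor> \<le> real_of_int K" "real_of_int (-K) \<le> real_of_int \<lfloor>x $ i\<rfloor>"
        using fi \<open>\<bar>x $ i\<bar> \<le> B\<close> by auto
      then show ?thesis by (simp only: of_int_le_iff atLeastAtMost_iff) 
    qed
    then show "x \<in> (\<lambda>f. \<chi> i. of_int (f i)) ` (\<Pi>\<^sub>E i\<in>UNIV. {-K..K})"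
      using eq by (intro image_eqI[of _ _ "\<lambda>i. \<lfloor>x $ i\<rfloor>"]) auto
  qed
  moreover have "finite (\<Pi>\<^sub>E i\<in>(UNIV::'D set). {-K..K})" by (intro finite_PiE) auto
  ultimately show ?thesis by (meson finite_imageI finite_subset)
qed

lemma ext_dil:
  fixes P :: "(real^'D) set"
  assumes "n \<ge> 1" "v extreme_point_of dil n P"
  shows "\<exists>u. u extreme_point_of P \<and> v = real n *\<^sub>R u"
proof -
  let ?f = "\<lambda>x::real^'D. real n *\<^sub>R x"
  have lin: "linear ?f" by (simp add: linear_scaleR)
  have inj: "inj ?f" using assms(1) by (auto simp: inj_on_def)
  from assms(2) obtain u where u: "u \<in> P" "v = ?f u"
    by (auto simp: extreme_point_of_def dil_def)
  have "u extreme_point_of P"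
    unfolding extreme_point_of_def
  proof (intro conjI ballI u(1))
    fix a b assume ab: "a \<in> P" "b \<in> P"
    show "u \<notin> open_segment a b"
    proof
      assume "u \<in> open_segment a b"
      then have "v \<in> open_segment (?f a) (?f b)"
        using open_segment_linear_image[OF lin inj] u by auto
      moreover have "?f a \<in> dil n P" "?f b \<in> dil n P" using ab by (auto simp: dil_def)
      ultimately show False using assms(2) by (auto simp: extreme_point_of_def)
    qed
  qed
  then show ?thesis using u by blast
qed

lemma good_count:
  fixes T W :: "'a set" and \<sigma> :: "'a \<Rightarrow> 'a"
  assumes "finite W" "T \<subseteq> W" "\<forall>x\<in>T. \<sigma> x \<in> T \<and> \<sigma> x \<noteq> x \<and> \<sigma> (\<sigma> x) = x"
  shows "real (card {S. S \<subseteq> W \<and> (\<forall>x\<in>T. \<not>(x\<in>S \<and> \<sigma> x \<in> S))}) * 4 powr (card T / 2)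
         \<le> 3 powr (card T / 2) * 2 ^ card W"
  using assms
proof (induction "card T" arbitrary: T W rule: less_induct)
  case less
  show ?case
  proof (cases "T = {}")
    case True
    then have "{S. S \<subseteq> W \<and> (\<forall>x\<in>T. \<not>(x\<in>S \<and> \<sigma> x \<in> S))} = Pow W" by auto
    then show ?thesis using True less.prems by (simp add: card_Pow)
  next
    case False
    then obtain a where aT: "a \<in> T" by blast
    define b where "b = \<sigma> a"
    have "\<sigma> a \<in> T \<and> \<sigma> a \<noteq> a \<and> \<sigma> (\<sigma> a) = a" using less.prems(3) aT by blast
    then have bT: "b \<in> T" and ab: "a \<noteq> b" and ba: "\<sigma> b = a" unfolding b_def by auto
    define T' where "T' = T - {a,b}"
    define W' where "W' = W - {a,b}"
    have finT: "finite T" using less.prems finite_subset by blast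
    have cT: "card T = card T' + 2"
    proof -
      have "card {a,b} = 2" using ab by simp
      moreover have "card {a,b} \<le> card T" using aT bT finT by (intro card_mono) auto
      ultimately show ?thesis using card_Diff_subset[of "{a,b}" T] aT bT unfolding T'_def by simp
    qed
    have cT': "card T' < card T" using cT by simp
    have finW: "finite W'" using less.prems(1) unfolding W'_def by simp
    have TW': "T' \<subseteq> W'" using less.prems(2) unfolding T'_def W'_def by blast
    have cl': "\<forall>x\<in>T'. \<sigma> x \<in> T' \<and> \<sigma> x \<noteq> x \<and> \<sigma> (\<sigma> x) = x"
    proof
      fix x assume x: "x \<in> T'"
      then have xT: "x \<in> T" "x \<noteq> a" "x \<noteq> b" unfolding T'_def by auto
      have sx: "\<sigma> (\<sigma> x) = x" using xT(1) less.prems(3) by blast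
      have "\<sigma> x \<noteq> a" using sx xT(3) b_def by metis
      moreover have "\<sigma> x \<noteq> b" using sx xT(2) ba by metis
      ultimately show "\<sigma> x \<in> T' \<and> \<sigma> x \<noteq> x \<and> \<sigma> (\<sigma> x) = x" using xT less.prems(3) unfolding T'_def by auto
    qed
    define G where "G = {S. S \<subseteq> W \<and> (\<forall>x\<in>T. \<not>(x\<in>S \<and> \<sigma> x \<in> S))}"
    define G' where "G' = {S. S \<subseteq> W' \<and> (\<forall>x\<in>T'. \<not>(x\<in>S \<and> \<sigma> x \<in> S))}"
    have IH: "real (card G') * 4 powr (card T' / 2) \<le> 3 powr (card T' / 2) * 2 ^ card W'"
      unfolding G'_def using less.hyps[OF cT' finW TW' cl'] .
    have sub: "G \<subseteq> (\<lambda>(S,X). S \<union> X) ` (G' \<times> {{},{a},{b}})"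
    proof
      fix S assume S: "S \<in> G"
      have "\<not> (a \<in> S \<and> b \<in> S)" using S aT unfolding G_def b_def by blast
      then have "S \<inter> {a,b} \<in> {{},{a},{b}}" by auto
      moreover have "S - {a,b} \<in> G'" using S unfolding G_def G'_def W'_def T'_def by auto
      ultimately show "S \<in> (\<lambda>(S,X). S \<union> X) ` (G' \<times> {{},{a},{b}})"
        by (intro image_eqI[of _ _ "(S - {a,b}, S \<inter> {a,b})"]) auto
    qed
    have "G' \<subseteq> Pow W'" unfolding G'_def by auto
    then have finG': "finite G'" using finW finite_subset by blast
    have finP: "finite (G' \<times> {{},{a},{b}})" using finG' by simp
    have "card G \<le> card ((\<lambda>(S,X). S \<union> X) ` (G' \<times> {{},{a},{b}}))"
      using sub finP by (intro card_mono) auto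
    also have "\<dots> \<le> card (G' \<times> {{},{a},{b}})" using finP by (rule card_image_le)
    also have "\<dots> \<le> card G' * 3" by (simp add: card_cartesian_product card_insert_le_m1)
    finally have cG: "real (card G) \<le> 3 * real (card G')" by simp
    have cW: "card W = card W' + 2" unfolding W'_def using aT bT ab less.prems(1,2)
      by (subst card_Diff_subset) (auto dest: card_mono[of W "{a,b}"])
    have p4: "(4::real) powr (card T / 2) = 4 powr (card T' / 2) * 4"
      using cT by (simp add: add_divide_distrib powr_add)
    have p3: "(3::real) powr (card T / 2) = 3 powr (card T' / 2) * 3"
      using cT by (simp add: add_divide_distrib powr_add)
    have "real (card G) * 4 powr (card T / 2) \<le> 3 * real (card G') * 4 powr (card T' / 2) * 4"
      using cG p4 by simp
    also have "\<dots> \<le> 3 * (3 powr (card T' / 2) * 2 ^ card W') * 4"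
      using IH by simp
    also have "\<dots> = 3 powr (card T / 2) * 2 ^ card W" using p3 cW by (simp add: power_add)
    finally show ?thesis unfolding G_def .
  qed
qed

theorem lemma9:
  fixes P :: "(real ^ 'D) set" and r :: real
  assumes "polytope P"
    and "\<And>v. v extreme_point_of P \<Longrightarrow> \<forall>i. v $ i \<in> \<int>"
    and "r > 0"
  shows "\<exists>c>0. \<forall>n::nat. \<forall>F k. n \<ge> 1 \<longrightarrow> F \<subseteq> near_vertices r (dil n P) \<longrightarrow>
           k \<in> middle_pts r (sumset (dil n P) (dil n P)) \<longrightarrow>
           measure_pmf.prob
             (pmf_of_set {S. S \<subseteq> lattice_pts (dil n P) \<and> S \<inter> near_vertices r (dil n P) = F})
             {A. k \<notin> sumset A A}
           \<le> c * (3/4) powr (real (card (lattice_pts (dil n P \<inter> refl_set k (dil n P)))) / 2)"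
proof -
  define E where "E = {v. v extreme_point_of P}"
  have finE: "finite E" unfolding E_def
    using finite_polyhedron_extreme_points polytope_imp_polyhedron assms(1) by blast
  define Z0 where "Z0 = lattice_pts (cball (0::real^'D) r)"
  have finZ0: "finite Z0" unfolding Z0_def by (rule finite_lattice_pts) simp
  define b where "b = card E * card Z0"
  define c where "c = (3/4::real) powr (- (2 * real b + 1) / 2)"
  have cpos: "c > 0" unfolding c_def by simp
  have main: "measure_pmf.prob
             (pmf_of_set {S. S \<subseteq> lattice_pts (dil n P) \<and> S \<inter> near_vertices r (dil n P) = F})
             {A. k \<notin> sumset A A}
           \<le> c * (3/4) powr (real (card (lattice_pts (dil n P \<inter> refl_set k (dil n P)))) / 2)"
    if n1: "n \<ge> 1" and FN: "F \<subseteq> near_vertices r (dil n P)"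
      and km: "k \<in> middle_pts r (sumset (dil n P) (dil n P))" for n F k
  proof -
    define U where "U = lattice_pts (dil n P)"
    define N where "N = near_vertices r (dil n P)"
    define Tm where "Tm = lattice_pts (dil n P \<inter> refl_set k (dil n P))"
    have bdd: "bounded (dil n P)" unfolding dil_def
      using polytope_imp_bounded[OF assms(1)] by (rule bounded_scaling)
    have finU: "finite U" unfolding U_def using bdd by (rule finite_lattice_pts)
    have NU: "N \<subseteq> U" unfolding N_def U_def near_vertices_def by auto
    have finN: "finite N" using NU finU finite_subset by blast
    have Nsub: "N \<subseteq> (\<Union>u\<in>E. (\<lambda>z. real n *\<^sub>R u + z) ` Z0)"
    proof
      fix q assume "q \<in> N"
      then obtain v where q: "q \<in> lattice_pts (dil n P)" and v: "v extreme_point_of dil n P"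
        and dv: "dist q v \<le> r" unfolding N_def near_vertices_def by blast
      obtain u where u: "u extreme_point_of P" and vu: "v = real n *\<^sub>R u"
        using ext_dil[OF n1 v] by blast
      have uint: "\<forall>i. u $ i \<in> \<int>" using assms(2) u by blast
      have qint: "\<forall>i. q $ i \<in> \<int>" using q unfolding lattice_pts_def by blast
      have "q - v \<in> Z0" unfolding Z0_def lattice_pts_def
      proof (intro CollectI conjI allI)
        show "q - v \<in> cball 0 r" using dv by (simp add: dist_norm norm_minus_commute)
        fix i show "(q - v) $ i \<in> \<int>" using uint qint vu by (simp add: Ints_diff Ints_mult)
      qed
      moreover have "q = real n *\<^sub>R u + (q - v)" using vu by simp
      ultimately show "q \<in> (\<Union>u\<in>E. (\<lambda>z. real n *\<^sub>R u + z) ` Z0)"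
        using u unfolding E_def by blast
    qed
    have "card N \<le> card (\<Union>u\<in>E. (\<lambda>z. real n *\<^sub>R u + z) ` Z0)"
      using Nsub finE finZ0 by (intro card_mono) auto
    also have "\<dots> \<le> (\<Sum>u\<in>E. card ((\<lambda>z. real n *\<^sub>R u + z) ` Z0))" using finE by (rule card_UN_le)
    also have "\<dots> \<le> (\<Sum>u\<in>E. card Z0)" by (intro sum_mono card_image_le finZ0)
    finally have cardN: "card N \<le> b" unfolding b_def by simp
    have kint: "\<forall>i. k $ i \<in> \<int>" using km unfolding middle_pts_def lattice_pts_def by blast
    have Tmsym: "k - x \<in> Tm" if x: "x \<in> Tm" for x
    proof -
      from x have xd: "x \<in> dil n P" and xr: "x \<in> refl_set k (dil n P)" and xi: "\<forall>i. x $ i \<in> \<int>"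
        unfolding Tm_def lattice_pts_def by auto
      from xr obtain y where y: "y \<in> dil n P" "x = k - y" unfolding refl_set_def by blast
      have "k - x \<in> refl_set k (dil n P)" unfolding refl_set_def using xd by blast
      moreover have "k - x \<in> dil n P" using y by simp
      moreover have "\<forall>i. (k - x) $ i \<in> \<int>" using kint xi by (simp add: Ints_diff)
      ultimately show ?thesis unfolding Tm_def lattice_pts_def by blast
    qed
    have TmU: "Tm \<subseteq> U" unfolding Tm_def U_def lattice_pts_def by auto
    define T' where "T' = {x \<in> Tm. x \<notin> N \<and> k - x \<notin> N \<and> k - x \<noteq> x}"
    have cl: "\<forall>x\<in>T'. (\<lambda>x. k - x) x \<in> T' \<and> (\<lambda>x. k - x) x \<noteq> x \<and> (\<lambda>x. k - x) ((\<lambda>x. k - x) x) = x"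
      unfolding T'_def using Tmsym by auto
    have T'W: "T' \<subseteq> U - N" unfolding T'_def using TmU by auto
    have finW: "finite (U - N)" using finU by simp
    define G where "G = {S. S \<subseteq> U - N \<and> (\<forall>x\<in>T'. \<not>(x\<in>S \<and> (\<lambda>x. k - x) x \<in> S))}"
    have GC: "real (card G) * 4 powr (card T' / 2) \<le> 3 powr (card T' / 2) * 2 ^ card (U - N)"
      unfolding G_def by (rule good_count[OF finW T'W cl])
    define \<Omega> where "\<Omega> = {S. S \<subseteq> U \<and> S \<inter> N = F}"
    have \<Omega>eq: "\<Omega> = (\<lambda>T. T \<union> F) ` Pow (U - N)"
    proof
      show "\<Omega> \<subseteq> (\<lambda>T. T \<union> F) ` Pow (U - N)"
      proof
        fix S assume "S \<in> \<Omega>"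
        then have "S \<subseteq> U" "S \<inter> N = F" unfolding \<Omega>_def by auto
        then show "S \<in> (\<lambda>T. T \<union> F) ` Pow (U - N)"
          by (intro image_eqI[of _ _ "S - N"]) auto
      qed
      show "(\<lambda>T. T \<union> F) ` Pow (U - N) \<subseteq> \<Omega>"
        using FN NU unfolding \<Omega>_def N_def by auto
    qed
    have inj: "inj_on (\<lambda>T. T \<union> F) (Pow (U - N))"
    proof (rule inj_onI)
      fix X Y assume "X \<in> Pow (U - N)" "Y \<in> Pow (U - N)" "X \<union> F = Y \<union> F"
      then show "X = Y" using FN unfolding N_def by blast
    qed
    have card\<Omega>: "card \<Omega> = 2 ^ card (U - N)"
      unfolding \<Omega>eq using card_image[OF inj] card_Pow[OF finW] by simp
    have fin\<Omega>: "finite \<Omega>" unfolding \<Omega>eq using finW by simp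
    have ne\<Omega>: "\<Omega> \<noteq> {}" unfolding \<Omega>eq by blast
    have sub: "\<Omega> \<inter> {A. k \<notin> sumset A A} \<subseteq> (\<lambda>T. T \<union> F) ` G"
    proof
      fix S assume S: "S \<in> \<Omega> \<inter> {A. k \<notin> sumset A A}"
      then have SU: "S \<subseteq> U" and SF: "S \<inter> N = F" and ks: "k \<notin> sumset S S" unfolding \<Omega>_def by auto
      have "S - N \<in> G" unfolding G_def
      proof (intro CollectI conjI ballI notI)
        show "S - N \<subseteq> U - N" using SU by auto
        fix x assume "x \<in> T'" "x \<in> S - N \<and> k - x \<in> S - N"
        then have "k \<in> sumset S S" unfolding sumset_def by (intro CollectI exI[of _ x] exI[of _ "k - x"]) auto
        then show False using ks by blast
      qed
      moreover have "S = (S - N) \<union> F" using SF by blast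
      ultimately show "S \<in> (\<lambda>T. T \<union> F) ` G" by blast
    qed
    have "G \<subseteq> Pow (U - N)" unfolding G_def by auto
    then have finG: "finite G" using finW finite_subset by blast
    have "card (\<Omega> \<inter> {A. k \<notin> sumset A A}) \<le> card ((\<lambda>T. T \<union> F) ` G)"
      using sub finG by (intro card_mono) auto
    also have "\<dots> \<le> card G" using finG by (rule card_image_le)
    finally have cE: "card (\<Omega> \<inter> {A. k \<notin> sumset A A}) \<le> card G" .
    have prob: "measure_pmf.prob (pmf_of_set \<Omega>) {A. k \<notin> sumset A A}
        = card (\<Omega> \<inter> {A. k \<notin> sumset A A}) / card \<Omega>"
      by (rule measure_pmf_of_set[OF ne\<Omega> fin\<Omega>])
    have p4: "(4::real) powr (card T' / 2) > 0" by simp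
    have "real (card G) / 2 ^ card (U - N) \<le> 3 powr (card T' / 2) / 4 powr (card T' / 2)"
      using GC p4 by (simp add: field_simps)
    also have "\<dots> = (3/4) powr (card T' / 2)" by (simp add: powr_divide)
    finally have pG: "real (card G) / 2 ^ card (U - N) \<le> (3/4) powr (card T' / 2)" .
    have probb: "measure_pmf.prob (pmf_of_set \<Omega>) {A. k \<notin> sumset A A} \<le> (3/4) powr (card T' / 2)"
    proof -
      have "real (card (\<Omega> \<inter> {A. k \<notin> sumset A A})) / 2 ^ card (U - N) \<le> real (card G) / 2 ^ card (U - N)"
        using cE by (intro divide_right_mono) auto
      then show ?thesis unfolding prob card\<Omega> using pG by simp
    qed
    have Tmsub: "Tm \<subseteq> T' \<union> N \<union> (\<lambda>x. k - x) ` N \<union> {(1/2) *\<^sub>R k}"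
    proof
      fix x assume x: "x \<in> Tm"
      show "x \<in> T' \<union> N \<union> (\<lambda>x. k - x) ` N \<union> {(1/2) *\<^sub>R k}"
      proof (cases "k - x = x")
        case True
        then have "k = 2 *\<^sub>R x" by (metis diff_eq_eq scaleR_2)
        then have "x = (1/2) *\<^sub>R k" by simp
        then show ?thesis by blast
      next
        case False
        have "k - x \<in> N \<Longrightarrow> x \<in> (\<lambda>x. k - x) ` N" by (intro image_eqI[of _ _ "k - x"]) auto
        then show ?thesis using x False unfolding T'_def by blast
      qed
    qed
    have finT': "finite T'" using T'W finW finite_subset by blast
    have "card Tm \<le> card (T' \<union> N \<union> (\<lambda>x. k - x) ` N \<union> {(1/2) *\<^sub>R k})"
      using Tmsub finT' finN by (intro card_mono) auto
    also have "\<dots> \<le> card (T' \<union> N \<union> (\<lambda>x. k - x) ` N) + card {(1/2) *\<^sub>R k}" by (rule card_Un_le)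
    also have "\<dots> \<le> card (T' \<union> N) + card ((\<lambda>x. k - x) ` N) + 1"
      using card_Un_le[of "T' \<union> N" "(\<lambda>x. k - x) ` N"] by simp
    also have "\<dots> \<le> card T' + card N + card ((\<lambda>x. k - x) ` N) + 1"
      using card_Un_le[of T' N] by simp
    also have "\<dots> \<le> card T' + 2 * b + 1" using cardN card_image_le[OF finN, of "\<lambda>x. k - x"] by simp
    finally have cTm: "real (card Tm) \<le> real (card T') + 2 * real b + 1" by linarith
    have "(3/4::real) powr (card T' / 2) \<le> (3/4) powr ((real (card Tm) - (2 * real b + 1)) / 2)"
      using cTm by (intro powr_mono') (auto simp: field_simps)
    also have "\<dots> = c * (3/4) powr (real (card Tm) / 2)"
      unfolding c_def powr_add[symmetric] by (rule arg_cong[where f="\<lambda>t. (3/4::real) powr t"]) (simp add: field_simps)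
    finally show ?thesis using probb unfolding \<Omega>_def Tm_def U_def N_def by linarith
  qed
  show ?thesis using cpos main by blast
qed

end
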